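(* Let $\mathbb{K}$ be a field of characteristic $0$, $R=\mathbb{K}[x_1,\dots,x_n]$, and let $I\subseteq R$ be an unmixed ideal with minimal primary decomposition $I=q_1\cap\dots\cap q_r$. For $i=1,\dots,r$ let $N_i$ be a set of Noetherian operators for $q_i$. For each $D\in\bigcup_i N_i$, choose $h_D\in\bigcap_{j:\,D\notin N_j}\sqrt{q_j}\setminus\bigcup_{i:\,D\in N_i}\sqrt{q_i}$. Then $N:=\{h_DD: D\in\bigcup_iN_i\}$ is a set of Noetherian operators for $I$.
   Context: $W_R=R\langle\partial_1,\dots,\partial_n\rangle$ is the Weyl algebra ($\partial_i=\partial/\partial x_i$) acting on $R$, written $D\bullet f$. A set $N\subseteq W_R$ is a set of Noetherian operators for an ideal $J$ if for all $f\in R$: $f\in J\iff D\bullet f\in\sqrt J$ for all $D\in N$. An ideal is unmixed if all its associated primes have the same dimension (in particular it has no embedded primes). An empty intersection of ideals is $R$. *)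

theory Defs
  imports Main "HOL-Library.Poly_Mapping" "HOL-Library.Extended_Nat"
begin

text \<open>Polynomial ring R = K[x_i : i in 'n] over a field K, where the finite type 'n
  indexes the n variables (n = CARD('n)).\<close>

type_synonym ('n, 'a) mpoly = "('n \<Rightarrow>\<^sub>0 nat) \<Rightarrow>\<^sub>0 'a"

text \<open>Elements of the Weyl algebra W_R, in normal form sum_alpha r_alpha d^alpha:
  a finitely supported map from multi-indices alpha to coefficients r_alpha in R.\<close>

type_synonym ('n, 'a) weyl = "('n \<Rightarrow>\<^sub>0 nat) \<Rightarrow>\<^sub>0 ('n, 'a) mpoly"

definition pdiff :: "('n::finite \<Rightarrow>\<^sub>0 nat) \<Rightarrow> ('n, 'a::field) mpoly \<Rightarrow> ('n, 'a) mpoly" where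
  "pdiff \<alpha> f = (\<Sum>\<beta>\<in>Poly_Mapping.keys f.
      Poly_Mapping.single (\<beta> - \<alpha>)
        ((\<Prod>i\<in>UNIV. \<Prod>k<Poly_Mapping.lookup \<alpha> i. (of_nat (Poly_Mapping.lookup \<beta> i - k) :: 'a)) * Poly_Mapping.lookup f \<beta>))"

definition weyl_act :: "('n::finite, 'a::field) weyl \<Rightarrow> ('n, 'a) mpoly \<Rightarrow> ('n, 'a) mpoly" where
  "weyl_act D f = (\<Sum>\<alpha>\<in>Poly_Mapping.keys D. Poly_Mapping.lookup D \<alpha> * pdiff \<alpha> f)"

definition weyl_lmult :: "('n::finite, 'a::field) mpoly \<Rightarrow> ('n, 'a) weyl \<Rightarrow> ('n, 'a) weyl" where
  "weyl_lmult h D = Poly_Mapping.map (\<lambda>c. h * c) D"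

definition is_ideal :: "'r::comm_ring_1 set \<Rightarrow> bool" where
  "is_ideal I \<longleftrightarrow> 0 \<in> I \<and> (\<forall>a\<in>I. \<forall>b\<in>I. a + b \<in> I) \<and> (\<forall>r. \<forall>a\<in>I. r * a \<in> I)"

definition radical :: "'r::comm_ring_1 set \<Rightarrow> 'r set" where
  "radical I = {f. \<exists>k. f ^ k \<in> I}"

definition prime_ideal :: "'r::comm_ring_1 set \<Rightarrow> bool" where
  "prime_ideal P \<longleftrightarrow> is_ideal P \<and> P \<noteq> UNIV \<and> (\<forall>a b. a * b \<in> P \<longrightarrow> a \<in> P \<or> b \<in> P)"

definition primary_ideal :: "'r::comm_ring_1 set \<Rightarrow> bool" where
  "primary_ideal Q \<longleftrightarrow> is_ideal Q \<and> Q \<noteq> UNIV \<and>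
     (\<forall>a b. a * b \<in> Q \<longrightarrow> a \<in> Q \<or> b \<in> radical Q)"

definition ass_primes :: "'r::comm_ring_1 set \<Rightarrow> 'r set set" where
  "ass_primes I = {P. prime_ideal P \<and> (\<exists>f. P = {g. g * f \<in> I})}"

text \<open>Dimension of a prime P = Krull dimension of R/P: supremum of the lengths k of
  strictly increasing chains of primes P = P_0 < P_1 < ... < P_k.\<close>

definition prime_dim :: "'r::comm_ring_1 set \<Rightarrow> enat" where
  "prime_dim P = (SUP k \<in> {k::nat. \<exists>c::nat \<Rightarrow> 'r set. c 0 = P \<and>
        (\<forall>i\<le>k. prime_ideal (c i)) \<and> (\<forall>i<k. c i \<subset> c (Suc i))}. enat k)"

definition unmixed :: "'r::comm_ring_1 set \<Rightarrow> bool" where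
  "unmixed I \<longleftrightarrow> (\<forall>P\<in>ass_primes I. \<forall>Q\<in>ass_primes I. prime_dim P = prime_dim Q)"

definition minimal_primary_decomposition :: "'r::comm_ring_1 set \<Rightarrow> nat \<Rightarrow> (nat \<Rightarrow> 'r set) \<Rightarrow> bool" where
  "minimal_primary_decomposition I r q \<longleftrightarrow>
     I = (\<Inter>i<r. q i) \<and> (\<forall>i<r. primary_ideal (q i)) \<and>
     (\<forall>i<r. \<forall>j<r. i \<noteq> j \<longrightarrow> radical (q i) \<noteq> radical (q j)) \<and>
     (\<forall>i<r. (\<Inter>j\<in>{j. j < r \<and> j \<noteq> i}. q j) \<noteq> I)"

definition noetherian_operators :: "('n::finite, 'a::field) weyl set \<Rightarrow> ('n, 'a) mpoly set \<Rightarrow> bool" where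
  "noetherian_operators N J \<longleftrightarrow> (\<forall>f. f \<in> J \<longleftrightarrow> (\<forall>D\<in>N. weyl_act D f \<in> radical J))"

end

theory Submission
  imports Defs
begin

lemma ideal_mult: "is_ideal Q \<Longrightarrow> a \<in> Q \<Longrightarrow> r * a \<in> Q"
  unfolding is_ideal_def by blast

lemma radical_mult:
  assumes "is_ideal Q" "a \<in> radical Q" shows "r * a \<in> radical Q"
proof -
  obtain k where "a ^ k \<in> Q" using assms(2) by (auto simp: radical_def)
  then have "r ^ k * a ^ k \<in> Q" using ideal_mult[OF assms(1)] by blast
  then show ?thesis by (auto simp: radical_def power_mult_distrib intro!: exI[of _ k])
qed

lemma radical_prime:
  assumes "primary_ideal Q" "a * b \<in> radical Q" "a \<notin> radical Q"
  shows "b \<in> radical Q"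
proof -
  obtain k where "(a*b) ^ k \<in> Q" using assms(2) by (auto simp: radical_def)
  then have "b ^ k * a ^ k \<in> Q" by (simp add: power_mult_distrib mult.commute)
  then have "b ^ k \<in> Q \<or> a ^ k \<in> radical Q" using assms(1) unfolding primary_ideal_def by blast
  moreover have "a ^ k \<notin> radical Q"
  proof
    assume "a ^ k \<in> radical Q"
    then obtain m where "(a ^ k) ^ m \<in> Q" by (auto simp: radical_def)
    then have "a ^ (k*m) \<in> Q" by (simp add: power_mult)
    then show False using assms(3) by (auto simp: radical_def)
  qed
  ultimately show ?thesis by (auto simp: radical_def)
qed

lemma pow_in_ideal:
  assumes "is_ideal Q" "f ^ k \<in> Q" "k \<le> K" shows "f ^ K \<in> Q"
proof -
  have "f ^ K = f ^ (K - k) * f ^ k" using assms(3)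
    by (metis le_add_diff_inverse2 power_add)
  then show ?thesis using ideal_mult[OF assms(1,2)] by simp
qed

lemma radical_Inter:
  fixes r :: nat
  assumes "\<forall>i<r. is_ideal (q i)"
  shows "radical (\<Inter>i<r. q i) = (\<Inter>i<r. radical (q i))"
proof
  show "radical (\<Inter>i<r. q i) \<subseteq> (\<Inter>i<r. radical (q i))"
    by (auto simp: radical_def)
next
  show "(\<Inter>i<r. radical (q i)) \<subseteq> radical (\<Inter>i<r. q i)"
  proof
    fix f assume "f \<in> (\<Inter>i<r. radical (q i))"
    then have "\<forall>i\<in>{..<r}. \<exists>k. f ^ k \<in> q i" by (auto simp: radical_def)
    then obtain k where k: "\<forall>i\<in>{..<r}. f ^ k i \<in> q i" by metis
    define K where "K = (\<Sum>i<r. k i)"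
    have "\<forall>i<r. f ^ K \<in> q i"
    proof (intro allI impI)
      fix i assume i: "i < r"
      have "k i \<le> K" unfolding K_def using i by (intro member_le_sum) simp_all
      then show "f ^ K \<in> q i" using pow_in_ideal assms i k by blast
    qed
    then show "f \<in> radical (\<Inter>i<r. q i)" by (auto simp: radical_def)
  qed
qed

lemma weyl_act_lmult: "weyl_act (weyl_lmult h D) f = h * weyl_act D f"
proof -
  have lk: "Poly_Mapping.lookup (weyl_lmult h D) a = h * Poly_Mapping.lookup D a" for a
    unfolding weyl_lmult_def by (simp add: Poly_Mapping.map.rep_eq when_def)
  have sub: "Poly_Mapping.keys (weyl_lmult h D) \<subseteq> Poly_Mapping.keys D"
    using lk by (auto simp: in_keys_iff)
  have "weyl_act (weyl_lmult h D) f =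
      (\<Sum>\<alpha>\<in>Poly_Mapping.keys D. Poly_Mapping.lookup (weyl_lmult h D) \<alpha> * pdiff \<alpha> f)"
    unfolding weyl_act_def
    by (rule sum.mono_neutral_left) (use sub in \<open>auto simp: in_keys_iff\<close>)
  also have "\<dots> = h * weyl_act D f"
    unfolding weyl_act_def lk by (simp add: sum_distrib_left mult.assoc)
  finally show ?thesis .
qed

theorem proposition5p2:
  fixes I :: "('n::finite, 'a::field_char_0) mpoly set"
    and r :: nat
    and q :: "nat \<Rightarrow> ('n, 'a) mpoly set"
    and N :: "nat \<Rightarrow> ('n, 'a) weyl set"
    and h :: "('n, 'a) weyl \<Rightarrow> ('n, 'a) mpoly"
  assumes "unmixed I"
    and "minimal_primary_decomposition I r q"
    and "\<forall>i<r. noetherian_operators (N i) (q i)"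
    and "\<forall>D\<in>(\<Union>i<r. N i).
           h D \<in> (\<Inter>j\<in>{j. j < r \<and> D \<notin> N j}. radical (q j))
                  - (\<Union>i\<in>{i. i < r \<and> D \<in> N i}. radical (q i))"
  shows "noetherian_operators {weyl_lmult (h D) D | D. D \<in> (\<Union>i<r. N i)} I"
proof -
  have Idef: "I = (\<Inter>i<r. q i)" and prim: "\<forall>i<r. primary_ideal (q i)"
    using assms(2) unfolding minimal_primary_decomposition_def by auto
  have idl: "\<forall>i<r. is_ideal (q i)" using prim unfolding primary_ideal_def by auto
  have radI: "radical I = (\<Inter>i<r. radical (q i))" using radical_Inter[OF idl] Idef by simp
  have NO: "\<And>i f. i < r \<Longrightarrow> f \<in> q i \<longleftrightarrow> (\<forall>D\<in>N i. weyl_act D f \<in> radical (q i))"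
    using assms(3) unfolding noetherian_operators_def by blast
  have H1: "\<And>D j. D \<in> (\<Union>i<r. N i) \<Longrightarrow> j < r \<Longrightarrow> D \<notin> N j \<Longrightarrow> h D \<in> radical (q j)"
    using assms(4) by blast
  have H2: "\<And>D j. D \<in> (\<Union>i<r. N i) \<Longrightarrow> j < r \<Longrightarrow> D \<in> N j \<Longrightarrow> h D \<notin> radical (q j)"
    using assms(4) by blast
  show ?thesis
    unfolding noetherian_operators_def
  proof (intro allI iffI)
    fix f assume fI: "f \<in> I"
    show "\<forall>D'\<in>{weyl_lmult (h D) D | D. D \<in> (\<Union>i<r. N i)}. weyl_act D' f \<in> radical I"
    proof (intro ballI)
      fix D' assume "D' \<in> {weyl_lmult (h D) D | D. D \<in> (\<Union>i<r. N i)}"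
      then obtain D where D': "D' = weyl_lmult (h D) D" and D: "D \<in> (\<Union>i<r. N i)" by blast
      have "\<forall>j<r. h D * weyl_act D f \<in> radical (q j)"
      proof (intro allI impI)
        fix j assume j: "j < r"
        show "h D * weyl_act D f \<in> radical (q j)"
        proof (cases "D \<in> N j")
          case True
          have "f \<in> q j" using fI Idef j by auto
          then have "weyl_act D f \<in> radical (q j)" using NO[OF j] True by blast
          then show ?thesis using radical_mult idl j by blast
        next
          case False
          then have "h D \<in> radical (q j)" using H1 D j by blast
          then show ?thesis using radical_mult[of "q j" "h D" "weyl_act D f"] idl j
            by (simp add: mult.commute)
        qed
      qed
      then show "weyl_act D' f \<in> radical I" unfolding D' weyl_act_lmult radI by blast
    qed
  next
    fix f assume A: "\<forall>D'\<in>{weyl_lmult (h D) D | D. D \<in> (\<Union>i<r. N i)}. weyl_act D' f \<in> radical I"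
    have "\<forall>i<r. f \<in> q i"
    proof (intro allI impI)
      fix i assume i: "i < r"
      have "\<forall>D\<in>N i. weyl_act D f \<in> radical (q i)"
      proof
        fix D assume Di: "D \<in> N i"
        then have D: "D \<in> (\<Union>i<r. N i)" using i by blast
        then have "weyl_act (weyl_lmult (h D) D) f \<in> radical I" using A by blast
        then have "h D * weyl_act D f \<in> radical (q i)" using radI i by (simp add: weyl_act_lmult)
        then show "weyl_act D f \<in> radical (q i)"
          using radical_prime prim i H2[OF D i Di] by blast
      qed
      then show "f \<in> q i" using NO[OF i] by blast
    qed
    then show "f \<in> I" using Idef by auto
  qed
qed

end
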